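(* Let $\Delta=(\Gamma,\mathbf{R})$ be a theory such that $\bigcirc(B/A)\in\mathbf{R}^{\mathrm{o}}$, there is no $r\in\mathbf{R}^{\mathrm{o}}$ with $r\triangleright\bigcirc(B/A)$, and $\Diamond(A\wedge B\wedge C)\in\Gamma$, where $A,B,C$ are Boolean formulas. Then $\Delta\mid\sim\bigcirc(B/A\wedge C)$.
   Context: Boolean formulas over propositional letters; $\models_{\mathrm{PL}}$ classical entailment, $\models_{\mathrm{S5}}$ S5 entailment; $\Diamond A=\neg\Box\neg A$ and $w\models\Box A$ iff $A$ holds at all worlds. A theory is $\Delta=(\Gamma,\mathbf{R})$, $\Gamma$ a finite set of Boolean or alethic formulas, $\mathbf{R}=(\mathbf{R}^{\Rightarrow},\mathbf{R}^{\mathrm{o}})$, $\mathbf{R}^{\Rightarrow}$ a finite (coherent) set of normality conditionals and $\mathbf{R}^{\mathrm{o}}$ a finite set of obligations $\bigcirc(B/A)$ (body $b=A$, head $h=B$). Overriding (relative to $\Gamma$): $r_j\triangleright r_i$ iff (i) $\{h(r_i),h(r_j)\}\cup\Gamma\models_{\mathrm{S5}}\bot$; (ii) $b(r_j)\models_{\mathrm{PL}}b(r_i)$ and $b(r_i)\not\models_{\mathrm{PL}}b(r_j)$; (iii) $\{h(r_i),b(r_j)\}\not\models_{\mathrm{PL}}\bot$. An $\mathbf{R}$-ordered model is $(W,\succeq_N,\succeq_I,v)$ with $W\neq\emptyset$, valuation $v$, $\succeq_N$ the normality total preorder determined by $\mathbf{R}^{\Rightarrow}$ via the lexicographic ranking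 on falsified conditionals (coherence: no nonempty $X\subseteq\mathbf{R}^{\Rightarrow}$ has $\{A\rightarrow B:A\Rightarrow B\in X\}\models_{\mathrm{PL}}\bigwedge_{r\in X}\neg b(r)$; $\mathcal{E}_0=\mathbf{R}^{\Rightarrow}$, $\mathcal{E}_{i+1}=\{A\Rightarrow B\in\mathbf{R}^{\Rightarrow}:\mathrm{m}(\mathcal{E}_i)\models_{\mathrm{PL}}\neg A\}$ with $\mathrm{m}(X)=\{A\rightarrow B:A\Rightarrow B\in X\}$, $m$ the stabilization index, $\Delta_i=\mathcal{E}_i\setminus\mathcal{E}_{i+1}$, $\Delta_m=\mathcal{E}_m$; $w_1\succeq_N w_2$ iff $\langle|\Delta_{m-1}\cap F(w_1)|,\dots,|\Delta_0\cap F(w_1)|\rangle$ is lexicographically $\le$ the corresponding tuple for $w_2$, where $F(w)$ is the set of conditionals in $\mathbf{R}^{\Rightarrow}$ whose body holds and head fails at $w$), and $w_1\succeq_I w_2$ iff $V(w_1)\subseteq V(w_2)$ where $V(w)=\{r_i\in\mathbf{R}^{\mathrm{o}}:w\models b(r_i)\wedge\neg h(r_i)$ and $w\not\models b(r_j)$ for all $r_j\in\mathbf{R}^{\mathrm{o}}$ with $r_j\triangleright r_i\}$. $\max_{\succeq}(X)=\{w\in X:\forall u\in X(u\succeq w\Rightarrow w\succeq u)\}$. Lifting: $U\succeq_I^{s}U'$ iff for every $u'\in U'$ there is $u\in U$ with $u\succeq_I u'$. Truth: $w\models\bigcirc(B/A)$ iff $\max_{\succeq_N}(\Vert A\wedge\neg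 B\Vert)\not\succeq_I^{s}\max_{\succeq_N}(\Vert A\wedge B\Vert)$. $\Delta\mid\sim\varphi$ iff in every $\mathbf{R}$-ordered model every world satisfying all of $\Gamma$ satisfies $\varphi$. *)

theory Defs
  imports Main
begin

datatype 'a bform = BVar 'a | BTop | BBot | BNot "'a bform" | BAnd "'a bform" "'a bform"
  | BOr "'a bform" "'a bform" | BImp "'a bform" "'a bform"

primrec beval :: "('a \<Rightarrow> bool) \<Rightarrow> 'a bform \<Rightarrow> bool" where
  "beval v (BVar p) = v p"
| "beval v BTop = True"
| "beval v BBot = False"
| "beval v (BNot a) = (\<not> beval v a)"
| "beval v (BAnd a b) = (beval v a \<and> beval v b)"
| "beval v (BOr a b) = (beval v a \<or> beval v b)"
| "beval v (BImp a b) = (beval v a \<longrightarrow> beval v b)"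

definition pl_entails :: "'a bform \<Rightarrow> 'a bform \<Rightarrow> bool" where
  "pl_entails a b \<longleftrightarrow> (\<forall>v. beval v a \<longrightarrow> beval v b)"

datatype 'a mform = MB "'a bform" | MNot "'a mform" | MAnd "'a mform" "'a mform"
  | MOr "'a mform" "'a mform" | MImp "'a mform" "'a mform" | MBox "'a mform"

definition MDia :: "'a mform \<Rightarrow> 'a mform" where
  "MDia f = MNot (MBox (MNot f))"

text \<open>Truth at a world w of a model with world set W and valuation v; Box quantifies
  over all worlds (universal accessibility, S5).\<close>
primrec msat :: "'w set \<Rightarrow> ('w \<Rightarrow> 'a \<Rightarrow> bool) \<Rightarrow> 'w \<Rightarrow> 'a mform \<Rightarrow> bool" where
  "msat W v w (MB a) = beval (v w) a"
| "msat W v w (MNot f) = (\<not> msat W v w f)"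
| "msat W v w (MAnd f g) = (msat W v w f \<and> msat W v w g)"
| "msat W v w (MOr f g) = (msat W v w f \<or> msat W v w g)"
| "msat W v w (MImp f g) = (msat W v w f \<longrightarrow> msat W v w g)"
| "msat W v w (MBox f) = (\<forall>u\<in>W. msat W v u f)"

text \<open>S5-unsatisfiability of a set of formulas (i.e. S \<Turnstile>_S5 \<bottom>).  Worlds are taken to be
  valuations themselves; this loses no generality for S5 (universal models).\<close>
definition s5_unsat :: "'a mform set \<Rightarrow> bool" where
  "s5_unsat S \<longleftrightarrow> \<not> (\<exists>(W :: ('a \<Rightarrow> bool) set) u. u \<in> W \<and> (\<forall>f\<in>S. msat W (\<lambda>x. x) u f))"

text \<open>A normality conditional A \<Rightarrow> B and an obligation O(B/A) are both represented as a
  pair (body, head) = (A, B).\<close>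
type_synonym 'a rule = "'a bform \<times> 'a bform"

definition body :: "'a rule \<Rightarrow> 'a bform" where "body r = fst r"
definition head :: "'a rule \<Rightarrow> 'a bform" where "head r = snd r"

definition overrides :: "'a mform set \<Rightarrow> 'a rule \<Rightarrow> 'a rule \<Rightarrow> bool" where
  "overrides \<Gamma> rj ri \<longleftrightarrow>
     s5_unsat ({MB (head ri), MB (head rj)} \<union> \<Gamma>)
   \<and> pl_entails (body rj) (body ri) \<and> \<not> pl_entails (body ri) (body rj)
   \<and> (\<exists>v. beval v (head ri) \<and> beval v (body rj))"

definition mat_sat :: "('a \<Rightarrow> bool) \<Rightarrow> 'a rule set \<Rightarrow> bool" where
  "mat_sat v X \<longleftrightarrow> (\<forall>r\<in>X. beval v (body r) \<longrightarrow> beval v (head r))"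

definition coherent :: "'a rule set \<Rightarrow> bool" where
  "coherent Rn \<longleftrightarrow> (\<forall>X. X \<subseteq> Rn \<longrightarrow> X \<noteq> {} \<longrightarrow>
      \<not> (\<forall>v. mat_sat v X \<longrightarrow> (\<forall>r\<in>X. \<not> beval v (body r))))"

fun Eseq :: "'a rule set \<Rightarrow> nat \<Rightarrow> 'a rule set" where
  "Eseq Rn 0 = Rn"
| "Eseq Rn (Suc i) = {r \<in> Rn. \<forall>v. mat_sat v (Eseq Rn i) \<longrightarrow> \<not> beval v (body r)}"

definition stab_index :: "'a rule set \<Rightarrow> nat" where
  "stab_index Rn = (LEAST i. Eseq Rn (Suc i) = Eseq Rn i)"

definition Delta_part :: "'a rule set \<Rightarrow> nat \<Rightarrow> 'a rule set" where
  "Delta_part Rn i = (if i = stab_index Rn then Eseq Rn i else Eseq Rn i - Eseq Rn (Suc i))"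

definition falsified :: "'a rule set \<Rightarrow> ('w \<Rightarrow> 'a \<Rightarrow> bool) \<Rightarrow> 'w \<Rightarrow> 'a rule set" where
  "falsified Rn v w = {r \<in> Rn. beval (v w) (body r) \<and> \<not> beval (v w) (head r)}"

definition rank_tuple :: "'a rule set \<Rightarrow> ('w \<Rightarrow> 'a \<Rightarrow> bool) \<Rightarrow> 'w \<Rightarrow> nat list" where
  "rank_tuple Rn v w = map (\<lambda>i. card (Delta_part Rn i \<inter> falsified Rn v w)) (rev [0..<stab_index Rn])"

definition lex_le :: "nat list \<Rightarrow> nat list \<Rightarrow> bool" where
  "lex_le xs ys \<longleftrightarrow> xs = ys \<or> (xs, ys) \<in> lexord {(x, y). x < y}"

definition geN :: "'a rule set \<Rightarrow> ('w \<Rightarrow> 'a \<Rightarrow> bool) \<Rightarrow> 'w \<Rightarrow> 'w \<Rightarrow> bool" where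
  "geN Rn v w1 w2 \<longleftrightarrow> lex_le (rank_tuple Rn v w1) (rank_tuple Rn v w2)"

definition viol :: "'a mform set \<Rightarrow> 'a rule set \<Rightarrow> ('w \<Rightarrow> 'a \<Rightarrow> bool) \<Rightarrow> 'w \<Rightarrow> 'a rule set" where
  "viol \<Gamma> Ro v w = {ri \<in> Ro. beval (v w) (body ri) \<and> \<not> beval (v w) (head ri)
      \<and> (\<forall>rj\<in>Ro. overrides \<Gamma> rj ri \<longrightarrow> \<not> beval (v w) (body rj))}"

definition geI :: "'a mform set \<Rightarrow> 'a rule set \<Rightarrow> ('w \<Rightarrow> 'a \<Rightarrow> bool) \<Rightarrow> 'w \<Rightarrow> 'w \<Rightarrow> bool" where
  "geI \<Gamma> Ro v w1 w2 \<longleftrightarrow> viol \<Gamma> Ro v w1 \<subseteq> viol \<Gamma> Ro v w2"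

definition maxel :: "('w \<Rightarrow> 'w \<Rightarrow> bool) \<Rightarrow> 'w set \<Rightarrow> 'w set" where
  "maxel ge X = {w \<in> X. \<forall>u\<in>X. ge u w \<longrightarrow> ge w u}"

definition lift_ge :: "('w \<Rightarrow> 'w \<Rightarrow> bool) \<Rightarrow> 'w set \<Rightarrow> 'w set \<Rightarrow> bool" where
  "lift_ge ge U U' \<longleftrightarrow> (\<forall>u'\<in>U'. \<exists>u\<in>U. ge u u')"

definition ext :: "'w set \<Rightarrow> ('w \<Rightarrow> 'a \<Rightarrow> bool) \<Rightarrow> 'a bform \<Rightarrow> 'w set" where
  "ext W v a = {w \<in> W. beval (v w) a}"

datatype 'a dform = DAl "'a mform" | DObl "'a bform" "'a bform"
  \<comment> \<open>DObl A B stands for O(B/A)\<close>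

fun dsat :: "'a mform set \<Rightarrow> 'a rule set \<Rightarrow> 'a rule set \<Rightarrow> 'w set \<Rightarrow> ('w \<Rightarrow> 'a \<Rightarrow> bool) \<Rightarrow> 'w \<Rightarrow> 'a dform \<Rightarrow> bool" where
  "dsat \<Gamma> Rn Ro W v w (DAl f) = msat W v w f"
| "dsat \<Gamma> Rn Ro W v w (DObl A B) =
     (\<not> lift_ge (geI \<Gamma> Ro v)
          (maxel (geN Rn v) (ext W v (BAnd A (BNot B))))
          (maxel (geN Rn v) (ext W v (BAnd A B))))"

text \<open>\<Delta> |~ \<phi>, with models whose worlds range over the type 'w (the theorem is stated for
  an arbitrary type 'w, hence for all models).\<close>
definition dentails :: "'w itself \<Rightarrow> 'a mform set \<Rightarrow> 'a rule set \<Rightarrow> 'a rule set \<Rightarrow> 'a dform \<Rightarrow> bool" where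
  "dentails _ \<Gamma> Rn Ro \<phi> \<longleftrightarrow>
     (\<forall>(W :: 'w set) v. W \<noteq> {} \<longrightarrow>
        (\<forall>w\<in>W. (\<forall>g\<in>\<Gamma>. msat W v w g) \<longrightarrow> dsat \<Gamma> Rn Ro W v w \<phi>))"

end

theory Submission
  imports Defs
begin

lemma len_rank: "length (rank_tuple Rn v w) = stab_index Rn"
  by (simp add: rank_tuple_def)

lemma maxel_nonempty:
  assumes "w0 \<in> X"
  shows "\<exists>w. w \<in> maxel (geN Rn v) X"
proof -
  let ?r = "lex {(x, y::nat). x < y}"
  have wf: "wf ?r" by (rule wf_lex) (simp add: wf_less)
  have "rank_tuple Rn v w0 \<in> rank_tuple Rn v ` X" using assms by blast
  then obtain t where t: "t \<in> rank_tuple Rn v ` X" and tmin: "\<forall>y. (y, t) \<in> ?r \<longrightarrow> y \<notin> rank_tuple Rn v ` X"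
    using wf_eq_minimal[THEN iffD1, OF wf] by metis
  then obtain w where w: "w \<in> X" "t = rank_tuple Rn v w" by blast
  have "w \<in> maxel (geN Rn v) X"
    unfolding maxel_def
  proof (intro CollectI conjI ballI impI)
    show "w \<in> X" by fact
    fix u assume u: "u \<in> X" and g: "geN Rn v u w"
    have "rank_tuple Rn v u = rank_tuple Rn v w"
    proof (rule ccontr)
      assume ne: "rank_tuple Rn v u \<noteq> rank_tuple Rn v w"
      with g have "(rank_tuple Rn v u, rank_tuple Rn v w) \<in> lexord {(x, y). x < y}"
        by (simp add: geN_def lex_le_def)
      then have "(rank_tuple Rn v u, t) \<in> ?r" using w by (simp add: lexord_lex len_rank)
      with tmin u show False by blast
    qed
    then show "geN Rn v w u" by (simp add: geN_def lex_le_def)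
  qed
  then show ?thesis by blast
qed

theorem proposition6:
  fixes \<Gamma> :: "'a mform set" and Rn Ro :: "'a rule set" and A B C :: "'a bform"
  assumes "finite \<Gamma>" and "finite Rn" and "finite Ro" and "coherent Rn"
    and "(A, B) \<in> Ro"
    and "\<not> (\<exists>r\<in>Ro. overrides \<Gamma> r (A, B))"
    and "MDia (MB (BAnd (BAnd A B) C)) \<in> \<Gamma>"
  shows "dentails TYPE('w) \<Gamma> Rn Ro (DObl (BAnd A C) B)"
  unfolding dentails_def
proof (intro allI impI ballI)
  fix W :: "'w set" and v w
  assume "W \<noteq> {}" "w \<in> W" and G: "\<forall>g\<in>\<Gamma>. msat W v w g"
  then have "msat W v w (MDia (MB (BAnd (BAnd A B) C)))" using assms(7) by blast
  then obtain x where x: "x \<in> W" "beval (v x) A" "beval (v x) B" "beval (v x) C"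
    by (auto simp: MDia_def)
  then have "x \<in> ext W v (BAnd (BAnd A C) B)" by (simp add: ext_def)
  then obtain w0 where w0: "w0 \<in> maxel (geN Rn v) (ext W v (BAnd (BAnd A C) B))"
    using maxel_nonempty by metis
  then have w0B: "beval (v w0) B" by (simp add: maxel_def ext_def)
  have "\<not> geI \<Gamma> Ro v u w0" if u: "u \<in> maxel (geN Rn v) (ext W v (BAnd (BAnd A C) (BNot B)))" for u
  proof -
    from u have "beval (v u) A" "\<not> beval (v u) B" by (auto simp: maxel_def ext_def)
    then have "(A, B) \<in> viol \<Gamma> Ro v u" using assms(5,6) by (auto simp: viol_def body_def head_def)
    moreover have "(A, B) \<notin> viol \<Gamma> Ro v w0" using w0B by (simp add: viol_def head_def)
    ultimately show ?thesis by (auto simp: geI_def)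
  qed
  then show "dsat \<Gamma> Rn Ro W v w (DObl (BAnd A C) B)"
    using w0 by (auto simp: lift_ge_def)
qed

end
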